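(* Let $\mathbf{R}^{\mathrm{o}}$ be a finite set of obligations, $\mathbf{R}=(\emptyset,\mathbf{R}^{\mathrm{o}})$, fix a set $\Gamma$ of alethic formulas relative to which the overriding relation $\triangleright$ is computed, and let $M$ be a replete $\mathbf{R}$-ordered model. For every Boolean formula $a$ and world $w$ of $M$: if $w\models a$ and $w\models\bigvee_{H\in\mathit{maxf}(\mathbf{R}^{\mathrm{o}}_{\triangleright},a,\{a\})}\bigl(\bigwedge\mathrm{m}(H)\bigr)$, then $w\in\max_{\succeq_I}(\Vert a\Vert)$, with $out_4^{+}$ as the underlying I/O operation.
   Context: Boolean formulas over propositional letters; $\models_{\mathrm{PL}}$ classical entailment, $\models_{\mathrm{S5}}$ S5 entailment. An obligation is $\bigcirc(B/A)$ ($A,B$ Boolean) with body $b=A$, head $h=B$. Overriding: $r_j\triangleright r_i$ iff (i) $\{h(r_i),h(r_j)\}\cup\Gamma\models_{\mathrm{S5}}\bot$; (ii) $b(r_j)\models_{\mathrm{PL}}b(r_i)$ and $b(r_i)\not\models_{\mathrm{PL}}b(r_j)$; (iii) $\{h(r_i),b(r_j)\}\not\models_{\mathrm{PL}}\bot$. An $\mathbf{R}$-ordered model (no normality conditionals) is $(W,\succeq_N,\succeq_I,v)$ with $W\neq\emptyset$, valuation $v$, $\succeq_N=W\times W$, and $w_1\succeq_I w_2$ iff $V(w_1)\subseteq V(w_2)$, where $V(w)=\{r_i\in\mathbf{R}^{\mathrm{o}}:w\models b(r_i)\wedge\neg h(r_i)$ and $w\not\models b(r_j)$ for all $r_j\in\mathbf{R}^{\mathrm{o}}$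 with $r_j\triangleright r_i\}$. $\max_{\succeq_I}(X)=\{w\in X:\forall u\in X(u\succeq_I w\Rightarrow w\succeq_I u)\}$, $\Vert a\Vert$ the set of worlds where $a$ holds. Replete: every PL-consistent Boolean formula holds at some world. I/O: for a set $H$ of pairs of Boolean formulas, $\mathrm{m}(H)=\{a\rightarrow x:(a,x)\in H\}$ ($\bigwedge\mathrm{m}(\emptyset)=\top$), $out_4^{+}(H,a)=\{x:\{a\}\cup\mathrm{m}(H)\models_{\mathrm{PL}}x\}$; $\mathit{maxf}(N,a,C)$ is the set of $\subseteq$-maximal $H\subseteq N$ with $out_4^{+}(H,a)\cup C$ PL-consistent. Translation: for $r_i=\bigcirc(x/a)$, $D(r_i)=\{r_j\in\mathbf{R}^{\mathrm{o}}:r_j\triangleright r_i\}$, $r_i^{\triangleright}=(a\wedge\bigwedge_{r_j\in D(r_i)}\neg b(r_j),x)$ if $D(r_i)\neq\emptyset$, else $(a,x)$; $\mathbf{R}^{\mathrm{o}}_{\triangleright}=\{r^{\triangleright}:r\in\mathbf{R}^{\mathrm{o}}\}$. *)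

theory Defs
  imports Main
begin

datatype 'p bfm = BAtom 'p | BTop | BBot | BNeg "'p bfm" | BConj "'p bfm" "'p bfm"
  | BDisj "'p bfm" "'p bfm" | BImp "'p bfm" "'p bfm"

datatype 'p mfm = MAtom 'p | MTop | MBot | MNeg "'p mfm" | MConj "'p mfm" "'p mfm"
  | MDisj "'p mfm" "'p mfm" | MImp "'p mfm" "'p mfm" | MBox "'p mfm"

fun emb :: "'p bfm \<Rightarrow> 'p mfm" where
  "emb (BAtom p) = MAtom p"
| "emb BTop = MTop"
| "emb BBot = MBot"
| "emb (BNeg a) = MNeg (emb a)"
| "emb (BConj a b) = MConj (emb a) (emb b)"
| "emb (BDisj a b) = MDisj (emb a) (emb b)"
| "emb (BImp a b) = MImp (emb a) (emb b)"

fun bigconj :: "'p bfm list \<Rightarrow> 'p bfm" where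
  "bigconj [] = BTop"
| "bigconj [x] = x"
| "bigconj (x # xs) = BConj x (bigconj xs)"

fun beval :: "('p \<Rightarrow> bool) \<Rightarrow> 'p bfm \<Rightarrow> bool" where
  "beval v (BAtom p) = v p"
| "beval v BTop = True"
| "beval v BBot = False"
| "beval v (BNeg a) = (\<not> beval v a)"
| "beval v (BConj a b) = (beval v a \<and> beval v b)"
| "beval v (BDisj a b) = (beval v a \<or> beval v b)"
| "beval v (BImp a b) = (beval v a \<longrightarrow> beval v b)"

definition pl_entails :: "'p bfm set \<Rightarrow> 'p bfm \<Rightarrow> bool" where
  "pl_entails S x \<longleftrightarrow> (\<forall>v. (\<forall>y\<in>S. beval v y) \<longrightarrow> beval v x)"

definition pl_consistent :: "'p bfm set \<Rightarrow> bool" where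
  "pl_consistent S \<longleftrightarrow> \<not> pl_entails S BBot"

fun msat :: "('p \<Rightarrow> bool) set \<Rightarrow> ('p \<Rightarrow> bool) \<Rightarrow> 'p mfm \<Rightarrow> bool" where
  "msat W w (MAtom p) = w p"
| "msat W w MTop = True"
| "msat W w MBot = False"
| "msat W w (MNeg a) = (\<not> msat W w a)"
| "msat W w (MConj a b) = (msat W w a \<and> msat W w b)"
| "msat W w (MDisj a b) = (msat W w a \<or> msat W w b)"
| "msat W w (MImp a b) = (msat W w a \<longrightarrow> msat W w b)"
| "msat W w (MBox a) = (\<forall>u\<in>W. msat W u a)"

definition s5_entails :: "'p mfm set \<Rightarrow> 'p mfm \<Rightarrow> bool" where
  "s5_entails S x \<longleftrightarrow> (\<forall>W w. w \<in> W \<longrightarrow> (\<forall>y\<in>S. msat W w y) \<longrightarrow> msat W w x)"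

text \<open>An obligation O(B/A) is represented as the pair (A, B) = (body, head).\<close>
type_synonym 'p obl = "'p bfm \<times> 'p bfm"

abbreviation body :: "'p obl \<Rightarrow> 'p bfm" where "body r \<equiv> fst r"
abbreviation head :: "'p obl \<Rightarrow> 'p bfm" where "head r \<equiv> snd r"

text \<open>overrides Gamma rj ri  means  rj overrides ri (relative to Gamma).\<close>
definition overrides :: "'p mfm set \<Rightarrow> 'p obl \<Rightarrow> 'p obl \<Rightarrow> bool" where
  "overrides \<Gamma> rj ri \<longleftrightarrow>
     s5_entails ({emb (head ri), emb (head rj)} \<union> \<Gamma>) MBot
   \<and> pl_entails {body rj} (body ri) \<and> \<not> pl_entails {body ri} (body rj)
   \<and> \<not> pl_entails {head ri, body rj} BBot"

text \<open>A model is given by a set of worlds W and a valuation v; the orderings are determined.\<close>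
definition wsat :: "('w \<Rightarrow> 'p \<Rightarrow> bool) \<Rightarrow> 'w \<Rightarrow> 'p bfm \<Rightarrow> bool" where
  "wsat v w a \<longleftrightarrow> beval (v w) a"

definition Viol :: "'p mfm set \<Rightarrow> 'p obl set \<Rightarrow> ('w \<Rightarrow> 'p \<Rightarrow> bool) \<Rightarrow> 'w \<Rightarrow> 'p obl set" where
  "Viol \<Gamma> Ro v w = {ri \<in> Ro. wsat v w (body ri) \<and> \<not> wsat v w (head ri)
      \<and> (\<forall>rj\<in>Ro. overrides \<Gamma> rj ri \<longrightarrow> \<not> wsat v w (body rj))}"

definition ge_N :: "'w set \<Rightarrow> ('w \<times> 'w) set" where
  "ge_N W = W \<times> W"

definition ge_I :: "'p mfm set \<Rightarrow> 'p obl set \<Rightarrow> 'w set \<Rightarrow> ('w \<Rightarrow> 'p \<Rightarrow> bool) \<Rightarrow> ('w \<times> 'w) set" where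
  "ge_I \<Gamma> Ro W v = {(w1, w2). w1 \<in> W \<and> w2 \<in> W \<and> Viol \<Gamma> Ro v w1 \<subseteq> Viol \<Gamma> Ro v w2}"

definition max_rel :: "('w \<times> 'w) set \<Rightarrow> 'w set \<Rightarrow> 'w set" where
  "max_rel R X = {w \<in> X. \<forall>u\<in>X. (u, w) \<in> R \<longrightarrow> (w, u) \<in> R}"

definition ext :: "'w set \<Rightarrow> ('w \<Rightarrow> 'p \<Rightarrow> bool) \<Rightarrow> 'p bfm \<Rightarrow> 'w set" where
  "ext W v a = {w \<in> W. wsat v w a}"

definition replete :: "'w set \<Rightarrow> ('w \<Rightarrow> 'p \<Rightarrow> bool) \<Rightarrow> bool" where
  "replete W v \<longleftrightarrow> (\<forall>a. pl_consistent {a} \<longrightarrow> (\<exists>w\<in>W. wsat v w a))"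

definition mat :: "'p obl set \<Rightarrow> 'p bfm set" where
  "mat H = {BImp a x | a x. (a, x) \<in> H}"

definition out4p :: "'p obl set \<Rightarrow> 'p bfm \<Rightarrow> 'p bfm set" where
  "out4p H a = {x. pl_entails ({a} \<union> mat H) x}"

definition maxf :: "'p obl set \<Rightarrow> 'p bfm \<Rightarrow> 'p bfm set \<Rightarrow> 'p obl set set" where
  "maxf N a C = {H. H \<subseteq> N \<and> pl_consistent (out4p H a \<union> C)
      \<and> (\<forall>H'. H \<subset> H' \<and> H' \<subseteq> N \<longrightarrow> \<not> pl_consistent (out4p H' a \<union> C))}"

definition Dset :: "'p mfm set \<Rightarrow> 'p obl set \<Rightarrow> 'p obl \<Rightarrow> 'p obl set" where
  "Dset \<Gamma> Ro ri = {rj \<in> Ro. overrides \<Gamma> rj ri}"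

text \<open>The big conjunction over the (finite) set D is formed along some enumeration of D;
  its meaning does not depend on the enumeration chosen.\<close>
definition trans_obl :: "'p mfm set \<Rightarrow> 'p obl set \<Rightarrow> 'p obl \<Rightarrow> 'p obl" where
  "trans_obl \<Gamma> Ro r =
     (if Dset \<Gamma> Ro r \<noteq> {}
      then (BConj (body r)
              (bigconj (map (\<lambda>rj. BNeg (body rj)) (SOME xs. set xs = Dset \<Gamma> Ro r \<and> distinct xs))),
            head r)
      else r)"

definition trans_set :: "'p mfm set \<Rightarrow> 'p obl set \<Rightarrow> 'p obl set" where
  "trans_set \<Gamma> Ro = trans_obl \<Gamma> Ro ` Ro"

end

theory Submission
  imports Defs
begin

lemma beval_bigconj: "beval v (bigconj xs) = (\<forall>x\<in>set xs. beval v x)"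
  by (induction xs rule: bigconj.induct) auto

lemma trans_snd: "snd (trans_obl \<Gamma> Ro r) = snd r"
  by (simp add: trans_obl_def)

lemma trans_fst:
  assumes "finite Ro"
  shows "beval s (fst (trans_obl \<Gamma> Ro r)) =
     (beval s (fst r) \<and> (\<forall>rj\<in>Ro. overrides \<Gamma> rj r \<longrightarrow> \<not> beval s (fst rj)))"
proof (cases "Dset \<Gamma> Ro r = {}")
  case True
  then show ?thesis by (auto simp: trans_obl_def Dset_def)
next
  case False
  have fin: "finite (Dset \<Gamma> Ro r)" using assms by (simp add: Dset_def)
  let ?xs = "SOME xs. set xs = Dset \<Gamma> Ro r \<and> distinct xs"
  have "\<exists>xs. set xs = Dset \<Gamma> Ro r \<and> distinct xs"
    using finite_distinct_list[OF fin] by blast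
  then have "set ?xs = Dset \<Gamma> Ro r" by (rule someI_ex[THEN conjunct1])
  then show ?thesis using False
    by (auto simp: trans_obl_def beval_bigconj Dset_def)
qed

lemma viol_iff:
  assumes "finite Ro" "r \<in> Ro"
  shows "r \<in> Viol \<Gamma> Ro v u \<longleftrightarrow>
     (beval (v u) (fst (trans_obl \<Gamma> Ro r)) \<and> \<not> beval (v u) (snd (trans_obl \<Gamma> Ro r)))"
  using assms by (auto simp: Viol_def wsat_def trans_fst trans_snd)

theorem theorem1:
  fixes Ro :: "'p obl set"
    and \<Gamma> :: "'p mfm set"
    and W :: "'w set"
    and v :: "'w \<Rightarrow> 'p \<Rightarrow> bool"
    and a :: "'p bfm"
    and w :: 'w
  assumes "finite Ro"
    and "W \<noteq> {}"
    and "replete W v"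
    and "w \<in> W"
    and "wsat v w a"
    and "\<exists>H \<in> maxf (trans_set \<Gamma> Ro) a {a}. \<forall>\<phi> \<in> mat H. wsat v w \<phi>"
  shows "w \<in> max_rel (ge_I \<Gamma> Ro W v) (ext W v a)"
proof -
  obtain H where H: "H \<in> maxf (trans_set \<Gamma> Ro) a {a}" and wH: "\<forall>\<phi> \<in> mat H. wsat v w \<phi>"
    using assms(6) by blast
  have HN: "H \<subseteq> trans_set \<Gamma> Ro" and
    Hmax: "\<And>H'. H \<subset> H' \<Longrightarrow> H' \<subseteq> trans_set \<Gamma> Ro \<Longrightarrow> \<not> pl_consistent (out4p H' a \<union> {a})"
    using H by (auto simp: maxf_def)
  have wHp: "\<And>c x. (c, x) \<in> H \<Longrightarrow> beval (v w) c \<Longrightarrow> beval (v w) x"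
    using wH by (fastforce simp: mat_def wsat_def)
  have main: "Viol \<Gamma> Ro v w \<subseteq> Viol \<Gamma> Ro v u"
    if u: "u \<in> W" "wsat v u a" and sub: "Viol \<Gamma> Ro v u \<subseteq> Viol \<Gamma> Ro v w" for u
  proof
    fix r assume rw: "r \<in> Viol \<Gamma> Ro v w"
    have rR: "r \<in> Ro" using rw by (simp add: Viol_def)
    show "r \<in> Viol \<Gamma> Ro v u"
    proof (cases "\<forall>(c, x) \<in> H. beval (v u) c \<longrightarrow> beval (v u) x")
      case False
      then obtain c x where cx: "(c, x) \<in> H" "beval (v u) c" "\<not> beval (v u) x" by blast
      then obtain k where k: "k \<in> Ro" "(c, x) = trans_obl \<Gamma> Ro k"
        using HN by (auto simp: trans_set_def)
      have "k \<in> Viol \<Gamma> Ro v u" using viol_iff[OF assms(1) k(1)] cx k(2)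
        by (metis fst_conv snd_conv)
      then have "k \<in> Viol \<Gamma> Ro v w" using sub by blast
      then have "beval (v w) c" "\<not> beval (v w) x" using viol_iff[OF assms(1) k(1)] k(2)
        by (metis fst_conv snd_conv)+
      then show ?thesis using wHp cx(1) by blast
    next
      case True
      let ?t = "trans_obl \<Gamma> Ro r"
      have tv: "beval (v w) (fst ?t)" "\<not> beval (v w) (snd ?t)"
        using viol_iff[OF assms(1) rR, of \<Gamma> v w] rw by auto
      have tnH: "?t \<notin> H" using wHp tv by (metis prod.collapse)
      have tN: "?t \<in> trans_set \<Gamma> Ro" using rR by (simp add: trans_set_def)
      have "\<not> pl_consistent (out4p (insert ?t H) a \<union> {a})"
      proof -
        have "H \<subset> insert ?t H" using tnH by blast
        moreover have "insert ?t H \<subseteq> trans_set \<Gamma> Ro" using tN HN by blast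
        ultimately show ?thesis by (rule Hmax)
      qed
      then have ent: "pl_entails (out4p (insert ?t H) a \<union> {a}) BBot"
        by (simp add: pl_consistent_def)
      have "beval (v u) (fst ?t) \<and> \<not> beval (v u) (snd ?t)"
      proof (rule ccontr)
        assume nc: "\<not> ?thesis"
        have m: "\<forall>y\<in>{a} \<union> mat (insert ?t H). beval (v u) y"
        proof
          fix y assume y: "y \<in> {a} \<union> mat (insert ?t H)"
          show "beval (v u) y"
          proof (cases "y = a")
            case True then show ?thesis using u(2) by (simp add: wsat_def)
          next
            case False
            then obtain c x where yc: "y = BImp c x" "(c, x) = ?t \<or> (c, x) \<in> H"
              using y unfolding mat_def by blast
            show ?thesis
            proof (cases "(c, x) = ?t")
              case True
              then have "c = fst ?t" "x = snd ?t" by (metis fst_conv, metis snd_conv)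
              then show ?thesis using nc yc(1) by simp
            next
              case False then have "(c, x) \<in> H" using yc by blast
              then show ?thesis using \<open>\<forall>(c, x) \<in> H. beval (v u) c \<longrightarrow> beval (v u) x\<close> yc(1) by auto
            qed
          qed
        qed
        have "\<forall>y\<in>out4p (insert ?t H) a \<union> {a}. beval (v u) y"
          using m u(2) by (auto simp: out4p_def pl_entails_def wsat_def)
        moreover have "(\<forall>y\<in>out4p (insert ?t H) a \<union> {a}. beval (v u) y) \<longrightarrow> beval (v u) BBot"
          using ent unfolding pl_entails_def by (rule spec)
        ultimately show False by simp
      qed
      then show ?thesis using viol_iff[OF assms(1) rR, of \<Gamma> v u] by simp
    qed
  qed
  have wx: "w \<in> ext W v a" using assms(4,5) by (simp add: ext_def)
  show ?thesis unfolding max_rel_def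
  proof (intro CollectI conjI ballI impI)
    show "w \<in> ext W v a" by (rule wx)
    fix u assume uX: "u \<in> ext W v a" and uw: "(u, w) \<in> ge_I \<Gamma> Ro W v"
    have "u \<in> W" "wsat v u a" using uX by (simp_all add: ext_def)
    moreover have "Viol \<Gamma> Ro v u \<subseteq> Viol \<Gamma> Ro v w" using uw by (simp add: ge_I_def)
    ultimately have "Viol \<Gamma> Ro v w \<subseteq> Viol \<Gamma> Ro v u" by (rule main)
    then show "(w, u) \<in> ge_I \<Gamma> Ro W v" using assms(4) \<open>u \<in> W\<close> by (simp add: ge_I_def)
  qed
qed

end
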